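(* Let $S$ be a nonempty compact convex set in the plane and fix $0<\alpha<\pi$. Then there exist a point $O$ in the plane and two rays $q$ and $r$ emanating from $O$ and forming an angle $\alpha$, such that $S$ is contained in the closed convex wedge bounded by $q$ and $r$, the ray $q$ meets $S$ in exactly one point $X$, the ray $r$ meets $S$ in exactly one point $Y$, and $|OX|=|OY|$. *)

theory Defs
  imports "HOL-Analysis.Analysis"
begin

definition ray :: "real^2 \<Rightarrow> real^2 \<Rightarrow> (real^2) set" where
  "ray P d = {P + t *\<^sub>R d | t. t \<ge> 0}"

definition vangle :: "real^2 \<Rightarrow> real^2 \<Rightarrow> real" where
  "vangle u v = arccos ((u \<bullet> v) / (norm u * norm v))"

definition wedge :: "real^2 \<Rightarrow> real^2 \<Rightarrow> real^2 \<Rightarrow> (real^2) set" where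
  "wedge P u v = {P + s *\<^sub>R u + t *\<^sub>R v | s t. 0 \<le> s \<and> 0 \<le> t}"

end

theory Submission
  imports Defs
begin


definition ee :: "real \<Rightarrow> real^2" where "ee \<phi> = vector [cos \<phi>, sin \<phi>]"

lemma inner_ee: "p \<bullet> ee \<phi> = p$1 * cos \<phi> + p$2 * sin \<phi>"
  by (simp add: ee_def inner_vec_def sum_2)

lemma vec2_eq: "(x::real^2) = y \<longleftrightarrow> x$1 = y$1 \<and> x$2 = y$2"
  by (simp add: vec_eq_iff forall_2)

lemma inner2: "(x::real^2) \<bullet> y = x$1 * y$1 + x$2 * y$2"
  by (simp add: inner_vec_def sum_2)

definition hh :: "(real^2) set \<Rightarrow> real \<Rightarrow> real" where
  "hh S \<phi> = Sup ((\<lambda>p. p \<bullet> ee \<phi>) ` S)"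

lemma hh_ge: assumes "compact S" "p \<in> S" shows "p \<bullet> ee \<phi> \<le> hh S \<phi>"
proof -
  have "compact ((\<lambda>p. p \<bullet> ee \<phi>) ` S)"
    by (intro compact_continuous_image assms continuous_intros)
  then have "bdd_above ((\<lambda>p. p \<bullet> ee \<phi>) ` S)"
    by (simp add: bounded_imp_bdd_above compact_imp_bounded)
  then show ?thesis unfolding hh_def by (intro cSup_upper) (use assms in auto)
qed

lemma hh_att: assumes "compact S" "S \<noteq> {}" shows "\<exists>p\<in>S. p \<bullet> ee \<phi> = hh S \<phi>"
proof -
  have c: "continuous_on S (\<lambda>p. p \<bullet> ee \<phi>)" by (intro continuous_intros)
  obtain x where x: "x \<in> S" "\<forall>y\<in>S. y \<bullet> ee \<phi> \<le> x \<bullet> ee \<phi>"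
    using continuous_attains_sup[OF assms c] by blast
  have "hh S \<phi> = x \<bullet> ee \<phi>" unfolding hh_def
    by (rule cSup_eq_maximum) (use x in auto)
  then show ?thesis using x by auto
qed

lemma hh_lip: assumes "compact S" "S \<noteq> {}" "\<forall>p\<in>S. norm p \<le> B"
  shows "hh S x - hh S y \<le> B * (\<bar>cos x - cos y\<bar> + \<bar>sin x - sin y\<bar>)"
proof -
  obtain p where p: "p \<in> S" "p \<bullet> ee x = hh S x" using hh_att assms by blast
  have "p \<bullet> ee y \<le> hh S y" using hh_ge assms p by blast
  moreover have "p \<bullet> ee x - p \<bullet> ee y \<le> B * (\<bar>cos x - cos y\<bar> + \<bar>sin x - sin y\<bar>)"
  proof -
    have n: "\<bar>p$1\<bar> \<le> B" "\<bar>p$2\<bar> \<le> B" using assms(3) p(1) component_le_norm_cart order_trans by metis+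
    have "p \<bullet> ee x - p \<bullet> ee y = p$1 * (cos x - cos y) + p$2 * (sin x - sin y)"
      by (simp add: inner_ee algebra_simps)
    also have "\<dots> \<le> \<bar>p$1\<bar> * \<bar>cos x - cos y\<bar> + \<bar>p$2\<bar> * \<bar>sin x - sin y\<bar>"
      by (metis abs_ge_self abs_mult add_mono)
    also have "\<dots> \<le> B * \<bar>cos x - cos y\<bar> + B * \<bar>sin x - sin y\<bar>"
      by (intro add_mono mult_right_mono n) auto
    finally show ?thesis by (simp add: algebra_simps)
  qed
  ultimately show ?thesis using p by linarith
qed

lemma hh_cont: assumes "compact S" "S \<noteq> {}" shows "isCont (hh S) y"
proof -
  obtain B where B: "\<forall>p\<in>S. norm p \<le> B"
    using assms(1) compact_imp_bounded bounded_iff by blast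
  have le: "norm (hh S x - hh S y) \<le> B * (\<bar>cos x - cos y\<bar> + \<bar>sin x - sin y\<bar>)" for x
    using hh_lip[OF assms B, of x y] hh_lip[OF assms B, of y x]
    by (simp add: abs_minus_commute)
  have "((\<lambda>x. B * (\<bar>cos x - cos y\<bar> + \<bar>sin x - sin y\<bar>)) \<longlongrightarrow> B * (\<bar>cos y - cos y\<bar> + \<bar>sin y - sin y\<bar>)) (at y)"
    by (intro tendsto_intros)
  then have g: "((\<lambda>x. B * (\<bar>cos x - cos y\<bar> + \<bar>sin x - sin y\<bar>)) \<longlongrightarrow> 0) (at y)" by simp
  have ev: "eventually (\<lambda>x. norm (hh S x - hh S y) \<le> B * (\<bar>cos x - cos y\<bar> + \<bar>sin x - sin y\<bar>)) (at y)"
    using le by (intro always_eventually) blast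
  have "((\<lambda>x. hh S x - hh S y) \<longlongrightarrow> 0) (at y)"
    by (rule Lim_null_comparison[OF ev g])
  then show ?thesis unfolding isCont_def using Lim_null by blast
qed



lemma hh_per: "hh S (x + 2*pi) = hh S x"
  unfolding hh_def ee_def by simp

context
  fixes S :: "(real^2) set"
  assumes cS: "compact S" and nS: "S \<noteq> {}"
begin

definition HH :: "real \<Rightarrow> real" where "HH x = integral {-1..x} (hh S)"

lemma hh_cont_on: "continuous_on A (hh S)"
  by (intro continuous_at_imp_continuous_on ballI hh_cont[OF cS nS])

lemma HH_deriv: assumes "x > -1" shows "(HH has_real_derivative hh S x) (at x)"
proof -
  have "(HH has_real_derivative hh S x) (at x within {-1..x+1})"
    unfolding HH_def by (rule integral_has_real_derivative[OF hh_cont_on]) (use assms in auto)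
  moreover have "at x within {-1..x+1} = at x" by (rule at_within_Icc_at) (use assms in auto)
  ultimately show ?thesis by simp
qed

lemma HH_shift_deriv: assumes "x + c > -1"
  shows "((\<lambda>t. HH (t + c)) has_real_derivative hh S (x + c)) (at x)"
  using HH_deriv[OF assms] DERIV_shift by blast

lemma HH_cont: assumes "x > -1" shows "isCont HH x"
  using HH_deriv[OF assms] DERIV_isCont by blast

lemma HH_per: assumes "x \<ge> 0" shows "HH (x + 2*pi) - HH x = HH (0 + 2*pi) - HH 0"
proof (cases "x = 0")
  case True then show ?thesis by simp
next
  case False
  then have x: "0 < x" using assms by simp
  let ?f = "\<lambda>t. HH (t + 2*pi) - HH t"
  have d: "(?f has_real_derivative 0) (at t)" if "t > -1" for t
  proof -
    have "t + 2*pi > -1" using that pi_gt_zero by linarith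
    then have "(?f has_real_derivative hh S (t + 2*pi) - hh S t) (at t)"
      by (intro DERIV_diff HH_shift_deriv HH_deriv that)
    then show ?thesis by (simp add: hh_per)
  qed
  have "?f x = ?f 0"
    by (rule DERIV_isconst_end[OF x])
      (auto intro!: continuous_at_imp_continuous_on DERIV_isCont[OF d] d)
  then show ?thesis by simp
qed

definition Phi :: "real \<Rightarrow> real \<Rightarrow> real \<Rightarrow> real" where
  "Phi k \<gamma> t = -(hh S t + hh S (t + \<gamma>)) + k * (HH t - HH (t + \<gamma>))"

lemma Phi_per: assumes "t \<ge> 0" "\<gamma> \<ge> 0" shows "Phi k \<gamma> (t + 2*pi) = Phi k \<gamma> t"
proof -
  have a: "HH (t + 2*pi) - HH t = HH (0 + 2*pi) - HH 0" using HH_per assms by auto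
  have b: "HH ((t + \<gamma>) + 2*pi) - HH (t + \<gamma>) = HH (0 + 2*pi) - HH 0" using HH_per assms by auto
  have c: "hh S (t + 2*pi + \<gamma>) = hh S (t + \<gamma>)" using hh_per[of S "t + \<gamma>"] by (simp add: add_ac)
  have e: "t + 2 * pi + \<gamma> = (t + \<gamma>) + 2*pi" by simp
  have q: "HH (t + 2*pi + \<gamma>) = HH (t + \<gamma>) + HH (t + 2*pi) - HH t"
    using a b unfolding e by simp
  show ?thesis unfolding Phi_def q c hh_per
    by (simp add: algebra_simps)
qed

lemma Phi_cont: assumes "t \<ge> 0" "\<gamma> \<ge> 0" shows "isCont (Phi k \<gamma>) t"
proof -
  have "isCont (\<lambda>t. HH (t + \<gamma>)) t"
    by (rule isCont_o2[OF _ HH_cont]) (use assms in auto)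
  moreover have "isCont (\<lambda>t. hh S (t + \<gamma>)) t"
    by (rule isCont_o2[OF _ hh_cont[OF cS nS]]) auto
  ultimately show ?thesis unfolding Phi_def
    using hh_cont[OF cS nS] HH_cont[of t] assms
    by (intro continuous_intros) auto
qed

lemma Phi_min: assumes "\<gamma> \<ge> 0"
  shows "\<exists>t. 0 < t \<and> t < 4*pi \<and> (\<forall>y. \<bar>t - y\<bar> < min t (4*pi - t) \<longrightarrow> Phi k \<gamma> t \<le> Phi k \<gamma> y)"
proof -
  have "continuous_on {0..4*pi} (Phi k \<gamma>)"
    by (intro continuous_at_imp_continuous_on ballI Phi_cont) (use assms in auto)
  then obtain t0 where t0: "t0 \<in> {0..4*pi}" "\<forall>y\<in>{0..4*pi}. Phi k \<gamma> t0 \<le> Phi k \<gamma> y"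
    using continuous_attains_inf[of "{0..4*pi}" "Phi k \<gamma>"] pi_gt_zero by auto
  have p2: "Phi k \<gamma> (2*pi) = Phi k \<gamma> 0" using Phi_per[of 0 \<gamma> k] assms by simp
  have p4: "Phi k \<gamma> (4*pi) = Phi k \<gamma> (2*pi)" using Phi_per[of "2*pi" \<gamma> k] assms by simp
  define t where "t = (if t0 = 0 \<or> t0 = 4*pi then 2*pi else t0)"
  have tm: "\<forall>y\<in>{0..4*pi}. Phi k \<gamma> t \<le> Phi k \<gamma> y"
    using t0 p2 p4 unfolding t_def by auto
  have tr: "0 < t" "t < 4*pi" using t0 pi_gt_zero unfolding t_def by auto
  show ?thesis
  proof (intro exI conjI allI impI)
    fix y assume "\<bar>t - y\<bar> < min t (4*pi - t)"
    then have "y \<in> {0..4*pi}" by auto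
    then show "Phi k \<gamma> t \<le> Phi k \<gamma> y" using tm by blast
  qed (use tr in auto)
qed

end


context
  fixes S :: "(real^2) set"
  assumes cS: "compact S" and nS: "S \<noteq> {}"
begin

lemma key:
  assumes g0: "\<gamma> \<ge> 0" and t: "0 < t" "t < 4*pi"
    and mn: "\<forall>y. \<bar>t - y\<bar> < min t (4*pi - t) \<longrightarrow> Phi S k \<gamma> t \<le> Phi S k \<gamma> y"
    and X: "X \<in> S" "X \<bullet> ee t = hh S t" and Y: "Y \<in> S" "Y \<bullet> ee (t + \<gamma>) = hh S (t + \<gamma>)"
  shows "-((-X$1 * sin t + X$2 * cos t) + (-Y$1 * sin (t+\<gamma>) + Y$2 * cos (t+\<gamma>)))
           + k*(hh S t - hh S (t+\<gamma>)) = 0"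
proof -
  define g where "g \<phi> = -(X \<bullet> ee \<phi> + Y \<bullet> ee (\<phi> + \<gamma>)) + k*(HH S \<phi> - HH S (\<phi> + \<gamma>))" for \<phi>
  have ge: "Phi S k \<gamma> \<phi> \<le> g \<phi>" for \<phi>
    using hh_ge[OF cS X(1), of \<phi>] hh_ge[OF cS Y(1), of "\<phi> + \<gamma>"]
    unfolding g_def Phi_def[OF cS nS] by linarith
  have eq: "g t = Phi S k \<gamma> t" unfolding g_def Phi_def[OF cS nS] using X Y by simp
  have d1: "((\<lambda>\<phi>. X \<bullet> ee \<phi>) has_real_derivative (-X$1 * sin t + X$2 * cos t)) (at t)"
    unfolding inner_ee by (auto intro!: derivative_eq_intros)
  have d2: "((\<lambda>\<phi>. Y \<bullet> ee (\<phi> + \<gamma>)) has_real_derivative (-Y$1 * sin (t+\<gamma>) + Y$2 * cos (t+\<gamma>))) (at t)"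
    unfolding inner_ee by (auto intro!: derivative_eq_intros)
  have d3: "(HH S has_real_derivative hh S t) (at t)" by (rule HH_deriv[OF cS nS]) (use t in auto)
  have d4: "((\<lambda>\<phi>. HH S (\<phi> + \<gamma>)) has_real_derivative hh S (t + \<gamma>)) (at t)"
    by (rule HH_shift_deriv[OF cS nS]) (use t g0 in auto)
  have dg: "(g has_real_derivative
      -((-X$1 * sin t + X$2 * cos t) + (-Y$1 * sin (t+\<gamma>) + Y$2 * cos (t+\<gamma>)))
           + k*(hh S t - hh S (t+\<gamma>))) (at t)"
    unfolding g_def by (intro DERIV_add DERIV_minus DERIV_cmult DERIV_diff d1 d2 d3 d4)
  show ?thesis
  proof (rule DERIV_local_min[OF dg])
    show "0 < min t (4*pi - t)" using t by auto
    show "\<forall>y. \<bar>t - y\<bar> < min t (4 * pi - t) \<longrightarrow> g t \<le> g y"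
      using mn ge eq by (metis order_trans)
  qed
qed

end


lemma alg_decomp:
  fixes c1 s1 ca sa h1 h2 p1 p2 :: real
  assumes "c1^2 + s1^2 = 1" "ca^2 + sa^2 = 1" "sa \<noteq> 0"
  defines "c2 \<equiv> -c1 * ca + s1 * sa" and "s2 \<equiv> -(s1 * ca + c1 * sa)"
  defines "o1 \<equiv> (h1 * s2 - h2 * s1)/(c1 * s2 - s1 * c2)" and "o2 \<equiv> (c1 * h2 - c2 * h1)/(c1 * s2 - s1 * c2)"
  defines "s \<equiv> (h2 - (p1 * c2 + p2 * s2))/sa" and "tt \<equiv> (h1 - (p1 * c1 + p2 * s1))/sa"
  shows "p1 = o1 + s * (-s1) + tt * s2" "p2 = o2 + s * c1 + tt * (-c2)"
proof -
  have det: "c1 * s2 - s1 * c2 = -sa"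
    unfolding c2_def s2_def using assms(1) by algebra
  show "p1 = o1 + s * (-s1) + tt * s2"
    unfolding o1_def s_def tt_def det using assms(3)
    apply (simp add: field_simps)
    unfolding c2_def s2_def using assms(1,2) by algebra
  show "p2 = o2 + s * c1 + tt * (-c2)"
    unfolding o2_def s_def tt_def det using assms(3)
    apply (simp add: field_simps)
    unfolding c2_def s2_def using assms(1,2) by algebra
qed

lemma alg_k:
  fixes c1 s1 ca sa h1 h2 :: real
  assumes "c1^2 + s1^2 = 1" "ca^2 + sa^2 = 1" "sa \<noteq> 0" "1 + ca \<noteq> 0"
  defines "c2 \<equiv> -c1 * ca + s1 * sa" and "s2 \<equiv> -(s1 * ca + c1 * sa)"
  defines "o1 \<equiv> (h1 * s2 - h2 * s1)/(c1 * s2 - s1 * c2)" and "o2 \<equiv> (c1 * h2 - c2 * h1)/(c1 * s2 - s1 * c2)"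
  shows "(o1 * (-s1) + o2 * c1) - (o1 * s2 + o2 * (-c2)) = sa/(1+ca) * (h1 - h2)"
proof -
  have det: "c1 * s2 - s1 * c2 = -sa"
    unfolding c2_def s2_def using assms(1) by algebra
  show ?thesis
    unfolding o1_def o2_def det using assms(3,4)
    apply (simp add: field_simps)
    unfolding c2_def s2_def using assms(1,2) by algebra
qed



theorem lemma2:
  fixes S :: "(real^2) set" and \<alpha> :: real
  assumes "S \<noteq> {}" and "compact S" and "convex S"
    and "0 < \<alpha>" and "\<alpha> < pi"
  shows "\<exists>P u v. u \<noteq> 0 \<and> v \<noteq> 0 \<and> vangle u v = \<alpha> \<and> S \<subseteq> wedge P u v \<and>
           (\<exists>X Y. ray P u \<inter> S = {X} \<and> ray P v \<inter> S = {Y} \<and> dist P X = dist P Y)"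
proof -
  note cS = assms(2) and nS = assms(1)
  define \<gamma> where "\<gamma> = pi + \<alpha>"
  define k where "k = sin \<alpha> / (1 + cos \<alpha>)"
  have g0: "\<gamma> \<ge> 0" unfolding \<gamma>_def using assms pi_gt_zero by linarith
  obtain t where t: "0 < t" "t < 4*pi"
    and mn: "\<forall>y. \<bar>t - y\<bar> < min t (4*pi - t) \<longrightarrow> Phi S k \<gamma> t \<le> Phi S k \<gamma> y"
    using Phi_min[OF cS nS g0, of k] by blast
  define ca where "ca = cos \<alpha>"
  define sa where "sa = sin \<alpha>"
  define c1 where "c1 = cos t"
  define s1 where "s1 = sin t"
  define c2 where "c2 = cos (t + \<gamma>)"
  define s2 where "s2 = sin (t + \<gamma>)"
  have c2e: "c2 = -c1 * ca + s1 * sa" unfolding c2_def c1_def s1_def ca_def sa_def \<gamma>_def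
    by (simp add: cos_add sin_add)
  have s2e: "s2 = -(s1 * ca + c1 * sa)" unfolding s2_def c1_def s1_def ca_def sa_def \<gamma>_def
    by (simp add: cos_add sin_add)
  have u1: "c1^2 + s1^2 = 1" unfolding c1_def s1_def by simp
  have u2: "ca^2 + sa^2 = 1" unfolding ca_def sa_def by simp
  have sap: "sa > 0" unfolding sa_def using assms by (simp add: sin_gt_zero)
  have cap: "1 + ca > 0" unfolding ca_def using cos_monotone_0_pi[of \<alpha> pi] assms by simp
  have sane: "sa \<noteq> 0" using sap by simp
  have cane: "1 + ca \<noteq> 0" using cap by simp
  have u3: "c2^2 + s2^2 = 1" unfolding c2e s2e using u1 u2 by algebra
  have det: "c1 * s2 - s1 * c2 = -sa" unfolding c2e s2e using u1 by algebra
  define h1 where "h1 = hh S t"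
  define h2 where "h2 = hh S (t + \<gamma>)"
  define Pt :: "real^2" where "Pt = vector [(h1 * s2 - h2 * s1)/(c1 * s2 - s1 * c2), (c1 * h2 - c2 * h1)/(c1 * s2 - s1 * c2)]"
  define u :: "real^2" where "u = vector [-s1, c1]"
  define v :: "real^2" where "v = vector [s2, -c2]"
  have ie1: "p \<bullet> ee t = p$1 * c1 + p$2 * s1" for p unfolding inner_ee c1_def s1_def by simp
  have ie2: "p \<bullet> ee (t + \<gamma>) = p$1 * c2 + p$2 * s2" for p unfolding inner_ee c2_def s2_def by simp
  have key': "X \<bullet> u - Y \<bullet> v = k * (h1 - h2)"
    if "X \<in> S" "X \<bullet> ee t = h1" "Y \<in> S" "Y \<bullet> ee (t + \<gamma>) = h2" for X Y
  proof -
    have "-((-X$1 * sin t + X$2 * cos t) + (-Y$1 * sin (t+\<gamma>) + Y$2 * cos (t+\<gamma>)))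
           + k*(hh S t - hh S (t+\<gamma>)) = 0"
      by (rule key[OF cS nS g0 t mn]) (use that h1_def h2_def in auto)
    then show ?thesis unfolding u_def v_def inner2 h1_def h2_def c1_def s1_def c2_def s2_def
      by (simp add: algebra_simps)
  qed
  have decomp: "p = Pt + ((h2 - p \<bullet> ee (t + \<gamma>))/sa) *\<^sub>R u + ((h1 - p \<bullet> ee t)/sa) *\<^sub>R v" for p
  proof -
    show ?thesis unfolding vec2_eq ie1 ie2 Pt_def u_def v_def det
      using sane apply (simp add: field_simps)
      unfolding c2e s2e using u1 u2 by algebra
  qed
  have kk: "Pt \<bullet> u - Pt \<bullet> v = k * (h1 - h2)"
  proof -
    have "sa / (1 + ca) * (h1 - h2) = (Pt \<bullet> u - Pt \<bullet> v)"
      unfolding Pt_def u_def v_def inner2 det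
      using sane cane apply (simp add: field_simps)
      unfolding c2e s2e using u1 u2 by algebra
    then show ?thesis unfolding k_def sa_def ca_def by simp
  qed
  have uu: "u \<bullet> u = 1" unfolding u_def inner2 using u1 by (simp add: power2_eq_square algebra_simps)
  have vv: "v \<bullet> v = 1" unfolding v_def inner2 using u3 by (simp add: power2_eq_square algebra_simps)
  have uv: "u \<bullet> v = ca" unfolding u_def v_def inner2 c2e s2e vector_2 using u1 by algebra
  have un1: "u \<bullet> ee t = 0" unfolding ie1 u_def by (simp add: algebra_simps)
  have vn2: "v \<bullet> ee (t + \<gamma>) = 0" unfolding ie2 v_def by (simp add: algebra_simps)
  have On1: "Pt \<bullet> ee t = h1" unfolding ie1 Pt_def det using sap apply (simp add: field_simps) using det by algebra
  have On2: "Pt \<bullet> ee (t + \<gamma>) = h2" unfolding ie2 Pt_def det using sap apply (simp add: field_simps) using det by algebra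
  obtain X where X: "X \<in> S" "X \<bullet> ee t = h1" using hh_att[OF cS nS] h1_def by blast
  obtain Y where Y: "Y \<in> S" "Y \<bullet> ee (t + \<gamma>) = h2" using hh_att[OF cS nS] h2_def by blast
  define a where "a = (h2 - X \<bullet> ee (t + \<gamma>))/sa"
  define c where "c = (h1 - Y \<bullet> ee t)/sa"
  have Xe: "X = Pt + a *\<^sub>R u" using decomp[of X] X unfolding a_def by simp
  have Ye: "Y = Pt + c *\<^sub>R v" using decomp[of Y] Y unfolding c_def by simp
  have a0: "a \<ge> 0" unfolding a_def using hh_ge[OF cS X(1), of "t + \<gamma>"] sap h2_def by simp
  have c0: "c \<ge> 0" unfolding c_def using hh_ge[OF cS Y(1), of t] sap h1_def by simp
  have Xu: "X \<bullet> u = Pt \<bullet> u + a" unfolding Xe by (simp add: inner_add_left uu)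
  have Yv: "Y \<bullet> v = Pt \<bullet> v + c" unfolding Ye by (simp add: inner_add_left vv)
  have ac: "a = c" using key'[OF X Y] kk Xu Yv by linarith
  have nu: "norm u = 1" using uu by (simp add: norm_eq_sqrt_inner)
  have nv: "norm v = 1" using vv by (simp add: norm_eq_sqrt_inner)
  show ?thesis
  proof (intro exI conjI)
    show "u \<noteq> 0" using nu by auto
    show "v \<noteq> 0" using nv by auto
    show "vangle u v = \<alpha>" unfolding vangle_def uv nu nv ca_def using assms by (simp add: arccos_cos)
    show "S \<subseteq> wedge Pt u v"
    proof
      fix p assume p: "p \<in> S"
      have "(h2 - p \<bullet> ee (t + \<gamma>))/sa \<ge> 0" using hh_ge[OF cS p, of "t + \<gamma>"] sap h2_def by simp
      moreover have "(h1 - p \<bullet> ee t)/sa \<ge> 0" using hh_ge[OF cS p, of t] sap h1_def by simp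
      ultimately show "p \<in> wedge Pt u v" unfolding wedge_def using decomp[of p] by blast
    qed
    show "ray Pt u \<inter> S = {X}"
    proof
      show "{X} \<subseteq> ray Pt u \<inter> S" unfolding ray_def using Xe a0 X by auto
      show "ray Pt u \<inter> S \<subseteq> {X}"
      proof
        fix Z assume "Z \<in> ray Pt u \<inter> S"
        then obtain r where r: "Z = Pt + r *\<^sub>R u" "r \<ge> 0" "Z \<in> S" unfolding ray_def by auto
        have "Z \<bullet> ee t = h1" unfolding r(1) by (simp add: inner_add_left un1 On1)
        then have "Z \<bullet> u = X \<bullet> u" using key'[OF r(3) _ Y] key'[OF X Y] by simp
        then have "r = a" unfolding r(1) Xu by (simp add: inner_add_left uu)
        then show "Z \<in> {X}" using r Xe by simp
      qed
    qed
    show "ray Pt v \<inter> S = {Y}"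
    proof
      show "{Y} \<subseteq> ray Pt v \<inter> S" unfolding ray_def using Ye c0 Y by auto
      show "ray Pt v \<inter> S \<subseteq> {Y}"
      proof
        fix Z assume "Z \<in> ray Pt v \<inter> S"
        then obtain r where r: "Z = Pt + r *\<^sub>R v" "r \<ge> 0" "Z \<in> S" unfolding ray_def by auto
        have "Z \<bullet> ee (t + \<gamma>) = h2" unfolding r(1) by (simp add: inner_add_left vn2 On2)
        then have "Z \<bullet> v = Y \<bullet> v" using key'[OF X r(3)] key'[OF X Y] by simp
        then have "r = c" unfolding r(1) Yv by (simp add: inner_add_left vv)
        then show "Z \<in> {Y}" using r Ye by simp
      qed
    qed
    show "dist Pt X = dist Pt Y"
      unfolding Xe Ye dist_norm using nu nv a0 c0 ac by simp
  qed
qed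


end
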